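(* Let $n\geq 3$, $k\in\mathbb{Z}_n$ with $k\neq 0$ and $2k\not\equiv 0\pmod n$, and let $C$ be a total perfect code in $\mathrm{GP}(n,k)$ such that $u_\ell,u_{\ell+1}\in C$ for some $\ell\in\mathbb{Z}_n$. Then $u_{\ell+6},u_{\ell+7}\in C$; consequently $n\equiv 0\pmod 6$ and $C\cap U=\{u_{\ell+6i},u_{\ell+6i+1}\mid i\in\mathbb{Z}_n\}$.
   Context: For an integer $n\geq 3$ and a nonzero $k\in\mathbb{Z}_n$, the generalized Petersen graph $\mathrm{GP}(n,k)$ is the simple graph with vertex set $\{u_i,v_i\mid i\in\mathbb{Z}_n\}$ and edges $u_iu_{i+1}$, $u_iv_i$, $v_iv_{i+k}$ for all $i\in\mathbb{Z}_n$ (indices modulo $n$). Let $U=\{u_i\mid i\in\mathbb{Z}_n\}$. A total perfect code in a graph $\Gamma$ is a set $C\subseteq V(\Gamma)$ such that every vertex of $\Gamma$ is adjacent to exactly one vertex of $C$. *)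

theory Defs
  imports Main
begin

(* Vertices of GP(n,k): u_i = Outer i, v_i = Inner i, with i in {0..<n} representing Z_n. *)
datatype gpvert = Outer nat | Inner nat

definition gp_verts :: "nat \<Rightarrow> gpvert set" where
  "gp_verts n = Outer ` {0..<n} \<union> Inner ` {0..<n}"

definition gp_adj :: "nat \<Rightarrow> nat \<Rightarrow> gpvert \<Rightarrow> gpvert \<Rightarrow> bool" where
  "gp_adj n k x y \<longleftrightarrow> x \<in> gp_verts n \<and> y \<in> gp_verts n \<and> x \<noteq> y \<and>
     (\<exists>i<n. (x = Outer i \<and> y = Outer ((i + 1) mod n)) \<or> (y = Outer i \<and> x = Outer ((i + 1) mod n))
          \<or> (x = Outer i \<and> y = Inner i) \<or> (y = Outer i \<and> x = Inner i)
          \<or> (x = Inner i \<and> y = Inner ((i + k) mod n)) \<or> (y = Inner i \<and> x = Inner ((i + k) mod n)))"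

definition total_perfect_code :: "nat \<Rightarrow> nat \<Rightarrow> gpvert set \<Rightarrow> bool" where
  "total_perfect_code n k C \<longleftrightarrow> C \<subseteq> gp_verts n \<and>
     (\<forall>x\<in>gp_verts n. \<exists>!c. c \<in> C \<and> gp_adj n k x c)"

end

theory Submission imports Defs begin

lemma mod_inv:
  fixes n i j k :: nat
  assumes "i < n" "j < n" "k \<le> n"
  shows "i = (j + k) mod n \<longleftrightarrow> j = (i + n - k) mod n"
proof -
  have "int i = (int j + int k) mod int n \<longleftrightarrow> int j = (int i - int k) mod int n"
  proof
    assume h: "int i = (int j + int k) mod int n"
    have "(int i - int k) mod int n = ((int j + int k) mod int n - int k) mod int n" using h by simp
    also have "\<dots> = int j mod int n" by (simp add: mod_diff_left_eq)
    also have "\<dots> = int j" using assms by simp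
    finally show "int j = (int i - int k) mod int n" by simp
  next
    assume h: "int j = (int i - int k) mod int n"
    have "(int j + int k) mod int n = ((int i - int k) mod int n + int k) mod int n" using h by simp
    also have "\<dots> = int i mod int n" by (simp add: mod_add_left_eq)
    also have "\<dots> = int i" using assms by simp
    finally show "int i = (int j + int k) mod int n" by simp
  qed
  moreover have "int ((j + k) mod n) = (int j + int k) mod int n" by (simp add: zmod_int)
  moreover have "int ((i + n - k) mod n) = (int i - int k) mod int n"
  proof -
    have "int ((i + n - k) mod n) = (int i + int n - int k) mod int n" using assms by (simp add: zmod_int of_nat_diff)
    also have "\<dots> = (int i - int k) mod int n" by (metis add.commute add_diff_eq mod_add_self2)
    finally show ?thesis .
  qed
  ultimately show ?thesis by (metis of_nat_eq_iff)
qed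

lemma adj_Outer:
  assumes "n \<ge> 3" "i < n"
  shows "gp_adj n k (Outer i) c \<longleftrightarrow> c = Outer ((i+1) mod n) \<or> c = Outer ((i+n-1) mod n) \<or> c = Inner i"
proof (cases c)
  case (Outer j)
  show ?thesis
  proof (cases "j < n")
    case True
    have ne1: "i \<noteq> (i+1) mod n" using assms by (cases "i+1 < n") (auto simp: mod_if)
    have ne2: "i \<noteq> (i+n-1) mod n" using assms by (cases "i = 0") (auto simp: mod_if)
    have "i = (j+1) mod n \<longleftrightarrow> j = (i+n-1) mod n" using mod_inv[of i n j 1] assms True by simp
    then show ?thesis using Outer True assms ne1 ne2 unfolding gp_adj_def gp_verts_def by auto
  next
    case False
    have "(i+1) mod n < n" "(i+n-1) mod n < n" using assms by auto
    then show ?thesis using Outer False assms unfolding gp_adj_def gp_verts_def by auto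
  qed
next
  case (Inner j)
  then show ?thesis using assms unfolding gp_adj_def gp_verts_def by auto
qed

lemma adj_Inner:
  assumes "n \<ge> 3" "0 < k" "k < n" "i < n"
  shows "gp_adj n k (Inner i) c \<longleftrightarrow> c = Outer i \<or> c = Inner ((i+k) mod n) \<or> c = Inner ((i+n-k) mod n)"
proof (cases c)
  case (Inner j)
  show ?thesis
  proof (cases "j < n")
    case True
    have ne1: "i \<noteq> (i+k) mod n" using assms by (cases "i+k < n") (auto simp: mod_if)
    have ne2: "i \<noteq> (i+n-k) mod n" using assms by (cases "i < k") (auto simp: mod_if)
    have "i = (j+k) mod n \<longleftrightarrow> j = (i+n-k) mod n" using mod_inv[of i n j k] assms True by simp
    then show ?thesis using Inner True assms ne1 ne2 unfolding gp_adj_def gp_verts_def by auto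
  next
    case False
    have "(i+k) mod n < n" "(i+n-k) mod n < n" using assms by auto
    then show ?thesis using Inner False assms unfolding gp_adj_def gp_verts_def by auto
  qed
next
  case (Outer j)
  then show ?thesis using assms unfolding gp_adj_def gp_verts_def by auto
qed

definition EO :: "bool \<Rightarrow> bool \<Rightarrow> bool \<Rightarrow> bool" where
  "EO p q r \<longleftrightarrow> (p \<and> \<not> q \<and> \<not> r) \<or> (\<not> p \<and> q \<and> \<not> r) \<or> (\<not> p \<and> \<not> q \<and> r)"

lemma tpc_EO:
  assumes "total_perfect_code n k C" "x \<in> gp_verts n"
    and "\<And>c. gp_adj n k x c \<longleftrightarrow> c = a \<or> c = b \<or> c = d"
    and "a \<noteq> b" "a \<noteq> d" "b \<noteq> d"
  shows "EO (a \<in> C) (b \<in> C) (d \<in> C)"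
proof -
  have "\<exists>!c. c \<in> C \<and> gp_adj n k x c" using assms(1,2) unfolding total_perfect_code_def by blast
  then have "\<exists>!c. c \<in> C \<and> (c = a \<or> c = b \<or> c = d)" using assms(3) by simp
  then show ?thesis using assms(4-6) unfolding EO_def by blast
qed

lemma nat_mod_plus:
  assumes "0 < n" "0 \<le> d"
  shows "nat ((i + d) mod int n) = (nat (i mod int n) + nat d) mod n"
proof -
  have "int ((nat (i mod int n) + nat d) mod n) = (i mod int n + d) mod int n"
    using assms by (simp add: zmod_int)
  also have "\<dots> = (i + d) mod int n" by (simp add: mod_add_left_eq)
  finally show ?thesis by (metis nat_int)
qed

lemma nat_mod_minus:
  assumes "0 < n" "0 \<le> d" "d \<le> int n"
  shows "nat ((i - d) mod int n) = (nat (i mod int n) + n - nat d) mod n"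
proof -
  have "int ((nat (i mod int n) + n - nat d) mod n) = (i mod int n + int n - d) mod int n"
    using assms by (simp add: zmod_int of_nat_diff)
  also have "\<dots> = (i mod int n - d) mod int n" by (metis add.commute add_diff_eq mod_add_self2)
  also have "\<dots> = (i - d) mod int n" by (simp add: mod_diff_left_eq)
  finally show ?thesis by (metis nat_int)
qed

definition xo :: "nat \<Rightarrow> gpvert set \<Rightarrow> int \<Rightarrow> bool" where
  "xo n C i \<longleftrightarrow> Outer (nat (i mod int n)) \<in> C"
definition yi :: "nat \<Rightarrow> gpvert set \<Rightarrow> int \<Rightarrow> bool" where
  "yi n C i \<longleftrightarrow> Inner (nat (i mod int n)) \<in> C"

lemma E1:
  assumes "n \<ge> 3" "total_perfect_code n k C"
  shows "EO (xo n C (i - 1)) (xo n C (i + 1)) (yi n C i)"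
proof -
  define m where "m = nat (i mod int n)"
  have mn: "m < n" using assms unfolding m_def by (simp add: nat_less_iff)
  have p: "nat ((i + 1) mod int n) = (m + 1) mod n" using nat_mod_plus[of n 1 i] assms unfolding m_def by simp
  have q: "nat ((i - 1) mod int n) = (m + n - 1) mod n" using nat_mod_minus[of n 1 i] assms unfolding m_def by simp
  have ne: "(i + 1) mod int n \<noteq> (i - 1) mod int n"
  proof
    assume "(i + 1) mod int n = (i - 1) mod int n"
    then have "int n dvd 2" by (metis diff_diff_eq2 diff_minus_eq_add mod_eq_dvd_iff one_add_one add_diff_cancel_left)
    then have "n dvd 2" by presburger
    then have "n \<le> 2" by (simp add: dvd_imp_le)
    then show False using assms by simp
  qed
  have ne': "(m + 1) mod n \<noteq> (m + n - 1) mod n"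
    using ne p q assms by (metis nat_eq_iff2 pos_mod_sign of_nat_0_less_iff less_le_trans zero_less_numeral)
  have "EO (Outer ((m+1) mod n) \<in> C) (Outer ((m+n-1) mod n) \<in> C) (Inner m \<in> C)"
    by (rule tpc_EO[OF assms(2), of "Outer m"]) (use mn assms ne' in \<open>auto simp: gp_verts_def adj_Outer\<close>)
  then show ?thesis unfolding xo_def yi_def p q m_def[symmetric] by (simp add: EO_def; blast)
qed

lemma E2:
  assumes "n \<ge> 3" "0 < k" "k < n" "(2 * k) mod n \<noteq> 0" "total_perfect_code n k C"
  shows "EO (xo n C i) (yi n C (i + int k)) (yi n C (i - int k))"
proof -
  define m where "m = nat (i mod int n)"
  have mn: "m < n" using assms unfolding m_def by (simp add: nat_less_iff)
  have p: "nat ((i + int k) mod int n) = (m + k) mod n" using nat_mod_plus[of n "int k" i] assms unfolding m_def by simp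
  have q: "nat ((i - int k) mod int n) = (m + n - k) mod n" using nat_mod_minus[of n "int k" i] assms unfolding m_def by simp
  have ne: "(i + int k) mod int n \<noteq> (i - int k) mod int n"
  proof
    assume "(i + int k) mod int n = (i - int k) mod int n"
    then have "int n dvd (i + int k) - (i - int k)" by (simp add: mod_eq_dvd_iff)
    then have "int n dvd int (2 * k)" by simp
    then have "n dvd 2 * k" by presburger
    then show False using assms by simp
  qed
  have ne': "(m + k) mod n \<noteq> (m + n - k) mod n"
    using ne p q assms by (metis nat_eq_iff2 pos_mod_sign of_nat_0_less_iff less_le_trans zero_less_numeral)
  have "EO (Outer m \<in> C) (Inner ((m+k) mod n) \<in> C) (Inner ((m+n-k) mod n) \<in> C)"
    by (rule tpc_EO[OF assms(5), of "Inner m"]) (use mn assms ne' in \<open>auto simp: gp_verts_def adj_Inner\<close>)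
  then show ?thesis unfolding xo_def yi_def p q m_def[symmetric] by simp
qed


lemma step:
  assumes "n \<ge> 3" "0 < k" "k < n" "(2 * k) mod n \<noteq> 0" "total_perfect_code n k C"
    and "xo n C L" "xo n C (L + 1)"
  shows "xo n C (L + 6) \<and> xo n C (L + 7) \<and> \<not> xo n C (L + 2) \<and> \<not> xo n C (L + 3)
    \<and> \<not> xo n C (L + 4) \<and> \<not> xo n C (L + 5)"
proof -
  define X where "X = (\<lambda>j a. xo n C (L + j + a * int k))"
  define Y where "Y = (\<lambda>j a. yi n C (L + j + a * int k))"
  have XE1: "EO (X (j - 1) a) (X (j + 1) a) (Y j a)" for j a
  proof -
    have "EO (xo n C ((L + j + a * int k) - 1)) (xo n C ((L + j + a * int k) + 1)) (yi n C (L + j + a * int k))"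
      using E1[OF assms(1,5)] .
    then show ?thesis unfolding X_def Y_def by (simp add: algebra_simps)
  qed
  have XE2: "EO (X j a) (Y j (a + 1)) (Y j (a - 1))" for j a
  proof -
    have "EO (xo n C (L + j + a * int k)) (yi n C ((L + j + a * int k) + int k)) (yi n C ((L + j + a * int k) - int k))"
      using E2[OF assms(1-5)] .
    then show ?thesis unfolding X_def Y_def by (simp add: algebra_simps)
  qed
  have h0: "X 0 0" using assms(6) unfolding X_def by simp
  have h1: "X 1 0" using assms(7) unfolding X_def by simp
  have E1_1_m2: "EO (X 0 (-2)) (X 2 (-2)) (Y 1 (-2))" using XE1[of "1" "-2"] by simp
  have E2_1_m1: "EO (X 1 (-1)) (Y 1 0) (Y 1 (-2))" using XE2[of "1" "-1"] by simp
  have E1_1_0: "EO (X 0 0) (X 2 0) (Y 1 0)" using XE1[of "1" "0"] by simp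
  have E2_1_1: "EO (X 1 1) (Y 1 2) (Y 1 0)" using XE2[of "1" "1"] by simp
  have E1_1_2: "EO (X 0 2) (X 2 2) (Y 1 2)" using XE1[of "1" "2"] by simp
  have E1_2_m1: "EO (X 1 (-1)) (X 3 (-1)) (Y 2 (-1))" using XE1[of "2" "-1"] by simp
  have E1_2_1: "EO (X 1 1) (X 3 1) (Y 2 1)" using XE1[of "2" "1"] by simp
  have E1_3_m2: "EO (X 2 (-2)) (X 4 (-2)) (Y 3 (-2))" using XE1[of "3" "-2"] by simp
  have E2_3_m1: "EO (X 3 (-1)) (Y 3 0) (Y 3 (-2))" using XE2[of "3" "-1"] by simp
  have E1_3_0: "EO (X 2 0) (X 4 0) (Y 3 0)" using XE1[of "3" "0"] by simp
  have E2_3_1: "EO (X 3 1) (Y 3 2) (Y 3 0)" using XE2[of "3" "1"] by simp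
  have E1_3_2: "EO (X 2 2) (X 4 2) (Y 3 2)" using XE1[of "3" "2"] by simp
  have E1_4_m1: "EO (X 3 (-1)) (X 5 (-1)) (Y 4 (-1))" using XE1[of "4" "-1"] by simp
  have E2_4_0: "EO (X 4 0) (Y 4 1) (Y 4 (-1))" using XE2[of "4" "0"] by simp
  have E1_4_1: "EO (X 3 1) (X 5 1) (Y 4 1)" using XE1[of "4" "1"] by simp
  have E1_5_m2: "EO (X 4 (-2)) (X 6 (-2)) (Y 5 (-2))" using XE1[of "5" "-2"] by simp
  have E2_5_m1: "EO (X 5 (-1)) (Y 5 0) (Y 5 (-2))" using XE2[of "5" "-1"] by simp
  have E1_5_0: "EO (X 4 0) (X 6 0) (Y 5 0)" using XE1[of "5" "0"] by simp
  have E2_5_1: "EO (X 5 1) (Y 5 2) (Y 5 0)" using XE2[of "5" "1"] by simp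
  have E1_5_2: "EO (X 4 2) (X 6 2) (Y 5 2)" using XE1[of "5" "2"] by simp
  have E1_6_m1: "EO (X 5 (-1)) (X 7 (-1)) (Y 6 (-1))" using XE1[of "6" "-1"] by simp
  have E2_6_0: "EO (X 6 0) (Y 6 1) (Y 6 (-1))" using XE2[of "6" "0"] by simp
  have E1_6_1: "EO (X 5 1) (X 7 1) (Y 6 1)" using XE1[of "6" "1"] by simp
  have g6: "X 6 0"
    using h0 h1 E1_1_m2 E2_1_m1 E1_1_0 E2_1_1 E1_1_2 E1_2_m1 E1_2_1 E1_3_m2 E2_3_m1 E1_3_0 E2_3_1 E1_3_2 E1_4_m1 E2_4_0 E1_4_1 E1_5_m2 E2_5_m1 E1_5_0 E2_5_1 E1_5_2 E1_6_m1 E2_6_0 E1_6_1 unfolding EO_def by sat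
  have E1_0_m2: "EO (X (-1) (-2)) (X 1 (-2)) (Y 0 (-2))" using XE1[of "0" "-2"] by simp
  have E2_0_m1: "EO (X 0 (-1)) (Y 0 0) (Y 0 (-2))" using XE2[of "0" "-1"] by simp
  have E2_0_1: "EO (X 0 1) (Y 0 2) (Y 0 0)" using XE2[of "0" "1"] by simp
  have E1_0_2: "EO (X (-1) 2) (X 1 2) (Y 0 2)" using XE1[of "0" "2"] by simp
  have E1_1_m1: "EO (X 0 (-1)) (X 2 (-1)) (Y 1 (-1))" using XE1[of "1" "-1"] by simp
  have E2_1_0: "EO (X 1 0) (Y 1 1) (Y 1 (-1))" using XE2[of "1" "0"] by simp
  have E1_1_1: "EO (X 0 1) (X 2 1) (Y 1 1)" using XE1[of "1" "1"] by simp
  have E1_2_m2: "EO (X 1 (-2)) (X 3 (-2)) (Y 2 (-2))" using XE1[of "2" "-2"] by simp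
  have E2_2_m1: "EO (X 2 (-1)) (Y 2 0) (Y 2 (-2))" using XE2[of "2" "-1"] by simp
  have E1_2_0: "EO (X 1 0) (X 3 0) (Y 2 0)" using XE1[of "2" "0"] by simp
  have E2_2_1: "EO (X 2 1) (Y 2 2) (Y 2 0)" using XE2[of "2" "1"] by simp
  have E1_2_2: "EO (X 1 2) (X 3 2) (Y 2 2)" using XE1[of "2" "2"] by simp
  have E1_3_m1: "EO (X 2 (-1)) (X 4 (-1)) (Y 3 (-1))" using XE1[of "3" "-1"] by simp
  have E2_3_0: "EO (X 3 0) (Y 3 1) (Y 3 (-1))" using XE2[of "3" "0"] by simp
  have E1_3_1: "EO (X 2 1) (X 4 1) (Y 3 1)" using XE1[of "3" "1"] by simp
  have E1_4_m2: "EO (X 3 (-2)) (X 5 (-2)) (Y 4 (-2))" using XE1[of "4" "-2"] by simp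
  have E2_4_m1: "EO (X 4 (-1)) (Y 4 0) (Y 4 (-2))" using XE2[of "4" "-1"] by simp
  have E1_4_0: "EO (X 3 0) (X 5 0) (Y 4 0)" using XE1[of "4" "0"] by simp
  have E2_4_1: "EO (X 4 1) (Y 4 2) (Y 4 0)" using XE2[of "4" "1"] by simp
  have E1_4_2: "EO (X 3 2) (X 5 2) (Y 4 2)" using XE1[of "4" "2"] by simp
  have E1_5_m1: "EO (X 4 (-1)) (X 6 (-1)) (Y 5 (-1))" using XE1[of "5" "-1"] by simp
  have E2_5_0: "EO (X 5 0) (Y 5 1) (Y 5 (-1))" using XE2[of "5" "0"] by simp
  have E1_5_1: "EO (X 4 1) (X 6 1) (Y 5 1)" using XE1[of "5" "1"] by simp
  have E1_6_m2: "EO (X 5 (-2)) (X 7 (-2)) (Y 6 (-2))" using XE1[of "6" "-2"] by simp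
  have E2_6_m1: "EO (X 6 (-1)) (Y 6 0) (Y 6 (-2))" using XE2[of "6" "-1"] by simp
  have E1_6_0: "EO (X 5 0) (X 7 0) (Y 6 0)" using XE1[of "6" "0"] by simp
  have E2_6_1: "EO (X 6 1) (Y 6 2) (Y 6 0)" using XE2[of "6" "1"] by simp
  have E1_6_2: "EO (X 5 2) (X 7 2) (Y 6 2)" using XE1[of "6" "2"] by simp
  have g7: "X 7 0"
    using h0 h1 E1_0_m2 E2_0_m1 E2_0_1 E1_0_2 E1_1_m1 E2_1_0 E1_1_1 E1_2_m2 E2_2_m1 E1_2_0 E2_2_1 E1_2_2 E1_3_m1 E2_3_0 E1_3_1 E1_4_m2 E2_4_m1 E1_4_0 E2_4_1 E1_4_2 E1_5_m1 E2_5_0 E1_5_1 E1_6_m2 E2_6_m1 E1_6_0 E2_6_1 E1_6_2 unfolding EO_def by sat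

  have "X 6 0 \<and> X 7 0 \<and> \<not> X 2 0 \<and> \<not> X 3 0 \<and> \<not> X 4 0 \<and> \<not> X 5 0"
    using h0 h1 g6 g7 E1_1_0 E1_2_0 E1_5_0 E1_6_0 unfolding EO_def by blast
  then show ?thesis unfolding X_def by simp
qed


lemma xo_nat: "xo n C (int a) \<longleftrightarrow> Outer (a mod n) \<in> C"
  unfolding xo_def by (metis nat_int zmod_int)

lemma pattern:
  assumes "n \<ge> 3" "0 < k" "k < n" "(2 * k) mod n \<noteq> 0" "total_perfect_code n k C"
    and "xo n C L" "xo n C (L + 1)"
  shows "xo n C (L + 6 * int m) \<and> xo n C (L + 6 * int m + 1)"
proof (induction m)
  case 0
  then show ?case using assms by simp
next
  case (Suc m)
  have "xo n C (L + 6 * int m + 6) \<and> xo n C (L + 6 * int m + 7)"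
    using step[OF assms(1-5), of "L + 6 * int m"] Suc by (simp add: add.assoc)
  then show ?case by (simp add: algebra_simps)
qed

lemma pattern_all:
  assumes "n \<ge> 3" "0 < k" "k < n" "(2 * k) mod n \<noteq> 0" "total_perfect_code n k C"
    and "xo n C L" "xo n C (L + 1)"
  shows "xo n C (L + int d) \<longleftrightarrow> d mod 6 \<le> 1"
proof -
  define m where "m = d div 6"
  define r where "r = d mod 6"
  have d0: "d = 6 * m + r" unfolding m_def r_def by simp
  then have d: "int d = 6 * int m + int r" by simp
  have r6: "r < 6" unfolding r_def by simp
  have p: "xo n C (L + 6 * int m)" "xo n C (L + 6 * int m + 1)" using pattern[OF assms] by auto
  have s: "\<not> xo n C (L + 6 * int m + 2) \<and> \<not> xo n C (L + 6 * int m + 3)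
    \<and> \<not> xo n C (L + 6 * int m + 4) \<and> \<not> xo n C (L + 6 * int m + 5)"
    using step[OF assms(1-5) p] by simp
  have "r = 0 \<or> r = 1 \<or> r = 2 \<or> r = 3 \<or> r = 4 \<or> r = 5" using r6 by auto
  then have "xo n C (L + 6 * int m + int r) \<longleftrightarrow> r \<le> 1" using p s by auto
  then show ?thesis using d r_def by (simp add: add.assoc)
qed

theorem mainTheorem9:
  fixes n k l :: nat and C :: "gpvert set"
  assumes "n \<ge> 3" and "0 < k" and "k < n" and "(2 * k) mod n \<noteq> 0"
    and "total_perfect_code n k C"
    and "l < n" and "Outer l \<in> C" and "Outer ((l + 1) mod n) \<in> C"
  shows "Outer ((l + 6) mod n) \<in> C \<and> Outer ((l + 7) mod n) \<in> C \<and> n mod 6 = 0 \<and>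
    C \<inter> Outer ` {0..<n} = {Outer ((l + 6 * i) mod n) | i. i < n} \<union> {Outer ((l + 6 * i + 1) mod n) | i. i < n}"
proof -
  have a0: "xo n C (int l)" using xo_nat[of n C l] assms by simp
  have a1: "xo n C (int l + 1)" using xo_nat[of n C "l+1"] assms by (simp add: add.commute)
  have P: "Outer ((l + d) mod n) \<in> C \<longleftrightarrow> d mod 6 \<le> 1" for d
    using pattern_all[OF assms(1-5) a0 a1, of d] xo_nat[of n C "l + d"] by simp
  have "(l + n) mod n = l" using assms by simp
  then have n1: "n mod 6 \<le> 1" using P[of n] assms by simp
  have "(l + (n + 1)) mod n = (l + 1) mod n" by (metis add.assoc add.commute mod_add_self2)
  then have n2: "(n + 1) mod 6 \<le> 1" using P[of "n+1"] assms by simp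
  have n6: "n mod 6 = 0" using n1 n2 by presburger
  have g6: "Outer ((l + 6) mod n) \<in> C" using P[of 6] by simp
  have g7: "Outer ((l + 7) mod n) \<in> C" using P[of 7] by simp
  have S: "C \<inter> Outer ` {0..<n} = {Outer ((l + 6 * i) mod n) | i. i < n} \<union> {Outer ((l + 6 * i + 1) mod n) | i. i < n}"
  proof
    show "C \<inter> Outer ` {0..<n} \<subseteq> {Outer ((l + 6 * i) mod n) | i. i < n} \<union> {Outer ((l + 6 * i + 1) mod n) | i. i < n}"
    proof
      fix x assume x: "x \<in> C \<inter> Outer ` {0..<n}"
      then obtain j where j: "x = Outer j" "j < n" by auto
      define d where "d = j + n - l"
      have ld: "l + d = j + n" unfolding d_def using assms by simp
      have "(l + d) mod n = j" using ld j by simp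
      then have "d mod 6 \<le> 1" using P[of d] x j by simp
      moreover have "d div 6 < n" unfolding d_def using j assms by simp
      moreover have "d = 6 * (d div 6) + d mod 6" by simp
      ultimately have "(d mod 6 = 0 \<and> l + 6 * (d div 6) = l + d \<or> d mod 6 = 1 \<and> l + 6 * (d div 6) + 1 = l + d) \<and> d div 6 < n"
        by linarith
      then show "x \<in> {Outer ((l + 6 * i) mod n) | i. i < n} \<union> {Outer ((l + 6 * i + 1) mod n) | i. i < n}"
      proof (elim conjE disjE)
        assume "l + 6 * (d div 6) = l + d" "d div 6 < n"
        then have "x = Outer ((l + 6 * (d div 6)) mod n)" using j \<open>(l + d) mod n = j\<close> by simp
        then show ?thesis using \<open>d div 6 < n\<close> by blast
      next
        assume "l + 6 * (d div 6) + 1 = l + d" "d div 6 < n"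
        then have "x = Outer ((l + 6 * (d div 6) + 1) mod n)" using j \<open>(l + d) mod n = j\<close> by metis
        then show ?thesis using \<open>d div 6 < n\<close> by blast
      qed
    qed
  next
    show "{Outer ((l + 6 * i) mod n) | i. i < n} \<union> {Outer ((l + 6 * i + 1) mod n) | i. i < n} \<subseteq> C \<inter> Outer ` {0..<n}"
    proof -
      have "Outer ((l + 6 * i) mod n) \<in> C" for i using P[of "6 * i"] by simp
      moreover have "Outer ((l + 6 * i + 1) mod n) \<in> C" for i using P[of "6 * i + 1"] by (simp add: add.assoc)
      moreover have "(a::nat) mod n \<in> {0..<n}" for a using assms by simp
      ultimately show ?thesis by auto
    qed
  qed
  show ?thesis using g6 g7 n6 S by blast
qed

end
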